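(* Let $\mathcal U,\mathcal V,\mathcal X$ be real finite-dimensional Euclidean spaces, $f:\mathcal U\to(-\infty,+\infty]$ closed proper convex, $g(v)=\frac12\langle v,\Sigma_g v\rangle-\langle b,v\rangle$ with $\Sigma_g\succeq0$ self-adjoint and $b\in\mathcal V$, $\mathcal F:\mathcal X\to\mathcal U$, $\mathcal G:\mathcal X\to\mathcal V$ linear, $c\in\mathcal X$, $\sigma>0$, and $\mathcal L_\sigma(u,v;x)=f(u)+g(v)+\langle x,\mathcal F^*u+\mathcal G^*v-c\rangle+\frac\sigma2\|\mathcal F^*u+\mathcal G^*v-c\|^2$. Let $\mathcal E_g\succ0$ be self-adjoint with $\mathcal E_g\succeq\sigma^{-1}\Sigma_g+\mathcal G\mathcal G^*$, $\mathcal T_g:=\mathcal E_g-\sigma^{-1}\Sigma_g-\mathcal G\mathcal G^*$, $\mathcal T_f\succeq 0$ self-adjoint on $\mathcal U$, $\widehat{\mathcal T}_f:=\mathcal T_f+\mathcal F\mathcal G^*\mathcal E_g^{-1}\mathcal G\mathcal F^*$. Let $\bar u\in\mathcal U,\bar v\in\mathcal V,\bar x\in\mathcal X$, $\bar c:=c-\mathcal F^*\bar u-\mathcal G^*\bar v$, $\bar\delta_g:=\mathcal F\mathcal G^*\mathcal E_g^{-1}(b-\mathcal G\bar x-\Sigma_g\bar v+\sigma\mathcal G\bar c)$, $\bar\alpha:=\sigma^{-1}b+\mathcal T_g\bar v+\mathcal G(c-\sigma^{-1}\bar x)$, and $$v':=\operatorname{argmin}_v\ \mathcal L_\sigma(\bar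 u,v;\bar x)+\tfrac\sigma2\|v-\bar v\|^2_{\mathcal T_g}=\mathcal E_g^{-1}(\bar\alpha-\mathcal G\mathcal F^*\bar u).$$ Let $(u^+,v^+)$ be the optimal solution of $$\min_{u,v}\ \mathcal L_\sigma(u,v;\bar x)+\tfrac\sigma2\|u-\bar u\|^2_{\widehat{\mathcal T}_f}+\tfrac\sigma2\|v-\bar v\|^2_{\mathcal T_g}.$$ Then $(u^+,v^+)$ is generated exactly by the procedure $$u^+=\operatorname{argmin}_u\ \mathcal L_\sigma(u,\bar v;\bar x)+\langle\bar\delta_g,u\rangle+\tfrac\sigma2\|u-\bar u\|^2_{\mathcal T_f},\qquad v^+=\operatorname{argmin}_v\ \mathcal L_\sigma(u^+,v;\bar x)+\tfrac\sigma2\|v-\bar v\|^2_{\mathcal T_g}=\mathcal E_g^{-1}(\bar\alpha-\mathcal G\mathcal F^*u^+),$$ and equivalently also by the procedure $$u^+=\operatorname{argmin}_u\ \mathcal L_\sigma(u,v';\bar x)+\tfrac\sigma2\|u-\bar u\|^2_{\mathcal T_f},\qquad v^+=\operatorname{argmin}_v\ \mathcal L_\sigma(u^+,v;\bar x)+\tfrac\sigma2\|v-\bar v\|^2_{\mathcal T_g}=\mathcal E_g^{-1}(\bar\alpha-\mathcal G\mathcal F^*u^+).$$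
   Context: $\|w\|_{\mathcal T}^2:=\langle w,\mathcal T w\rangle$; $\succ0$/$\succeq0$ denote positive definite/semidefinite; $\mathcal A\succeq\mathcal B$ means $\mathcal A-\mathcal B\succeq0$. *)

theory Defs
  imports "HOL-Analysis.Analysis"
begin

definition closed_proper_convex :: "('a::euclidean_space \<Rightarrow> ereal) \<Rightarrow> bool" where
  "closed_proper_convex f \<longleftrightarrow>
     (\<forall>x. f x \<noteq> -\<infinity>) \<and> (\<exists>x. f x \<noteq> \<infinity>) \<and>
     convex {(x, t::real). f x \<le> ereal t} \<and> closed {(x, t::real). f x \<le> ereal t}"

definition self_adjoint :: "('a::real_inner \<Rightarrow> 'a) \<Rightarrow> bool" where
  "self_adjoint S \<longleftrightarrow> (\<forall>x y. inner (S x) y = inner x (S y))"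

definition psd :: "('a::real_inner \<Rightarrow> 'a) \<Rightarrow> bool" where
  "psd S \<longleftrightarrow> (\<forall>x. 0 \<le> inner x (S x))"

definition pd :: "('a::real_inner \<Rightarrow> 'a) \<Rightarrow> bool" where
  "pd S \<longleftrightarrow> (\<forall>x. x \<noteq> 0 \<longrightarrow> 0 < inner x (S x))"

definition qn :: "('a::real_inner \<Rightarrow> 'a) \<Rightarrow> 'a \<Rightarrow> real" where
  "qn T w = inner w (T w)"

definition is_minimizer :: "('a \<Rightarrow> 'b::linorder) \<Rightarrow> 'a \<Rightarrow> bool" where
  "is_minimizer \<phi> x \<longleftrightarrow> (\<forall>y. \<phi> x \<le> \<phi> y)"

definition gq :: "('v::real_inner \<Rightarrow> 'v) \<Rightarrow> 'v \<Rightarrow> 'v \<Rightarrow> real" where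
  "gq Sg b v = 1/2 * inner v (Sg v) - inner b v"

definition Lsm :: "('v::real_inner \<Rightarrow> 'v) \<Rightarrow> 'v \<Rightarrow> ('x::real_inner \<Rightarrow> 'u::real_inner) \<Rightarrow>
    ('x \<Rightarrow> 'v) \<Rightarrow> 'x \<Rightarrow> real \<Rightarrow> 'u \<Rightarrow> 'v \<Rightarrow> 'x \<Rightarrow> real" where
  "Lsm Sg b F G c \<sigma> u v x =
     gq Sg b v + inner x (adjoint F u + adjoint G v - c)
     + \<sigma> / 2 * (norm (adjoint F u + adjoint G v - c))\<^sup>2"

definition Lag :: "('u::real_inner \<Rightarrow> ereal) \<Rightarrow> ('v::real_inner \<Rightarrow> 'v) \<Rightarrow> 'v \<Rightarrow>
    ('x::real_inner \<Rightarrow> 'u) \<Rightarrow> ('x \<Rightarrow> 'v) \<Rightarrow> 'x \<Rightarrow> real \<Rightarrow> 'u \<Rightarrow> 'v \<Rightarrow> 'x \<Rightarrow> ereal" where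
  "Lag f Sg b F G c \<sigma> u v x = f u + ereal (Lsm Sg b F G c \<sigma> u v x)"

end

theory Submission
  imports Defs
begin

lemma phi_form:
  fixes Sg :: "'v::euclidean_space \<Rightarrow> 'v" and b :: 'v
    and F :: "'x::euclidean_space \<Rightarrow> 'u::euclidean_space" and G :: "'x \<Rightarrow> 'v" and c x :: 'x
    and Eg :: "'v \<Rightarrow> 'v"
  assumes Sg: "linear Sg" "self_adjoint Sg" and FG: "linear F" "linear G"
    and s: "\<sigma> \<noteq> 0" and Eg: "linear Eg" "self_adjoint Eg"
  shows "Lsm Sg b F G c \<sigma> u v x + \<sigma>/2 * qn (\<lambda>v. Eg v - (1/\<sigma>) *\<^sub>R Sg v - G (adjoint G v)) (v - vbar)
    = \<sigma>/2 * inner v (Eg v) - \<sigma> * inner ((1/\<sigma>) *\<^sub>R b + (\<lambda>v. Eg v - (1/\<sigma>) *\<^sub>R Sg v - G (adjoint G v)) vbar + G (c - (1/\<sigma>) *\<^sub>R x) - G (adjoint F u)) v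
      + (inner x (adjoint F u - c) + \<sigma>/2 * (norm (adjoint F u - c))^2 + \<sigma>/2 * qn (\<lambda>v. Eg v - (1/\<sigma>) *\<^sub>R Sg v - G (adjoint G v)) vbar)"
proof -
  have lGa: "linear (adjoint G)" "linear (adjoint F)" using FG adjoint_linear by auto
  have aG: "\<And>y z. inner (adjoint G y) z = inner y (G z)" "\<And>y z. inner z (adjoint G y) = inner y (G z)"
    using adjoint_clauses[OF FG(2)] by (auto simp: inner_commute)
  have aF: "\<And>y z. inner (adjoint F y) z = inner y (F z)" "\<And>y z. inner z (adjoint F y) = inner y (F z)"
    using adjoint_clauses[OF FG(1)] by (auto simp: inner_commute)
  have sS: "\<And>y z. inner (Sg y) z = inner (Sg z) y" using Sg(2) unfolding self_adjoint_def by (metis inner_commute)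
  have sE: "\<And>y z. inner (Eg y) z = inner (Eg z) y" using Eg(2) unfolding self_adjoint_def by (metis inner_commute)
  have x1: "vbar \<bullet> G (adjoint G v) = v \<bullet> G (adjoint G vbar)" by (metis aG inner_commute)
  have x2: "u \<bullet> F (adjoint G v) = v \<bullet> G (adjoint F u)" by (metis aG aF inner_commute)
  have e: "Eg v \<bullet> vbar = v \<bullet> Eg vbar" "vbar \<bullet> Eg v = v \<bullet> Eg vbar" "G c \<bullet> v = v \<bullet> G c"
    "v \<bullet> Sg vbar = Sg v \<bullet> vbar" "vbar \<bullet> Sg v = Sg v \<bullet> vbar"
    "vbar \<bullet> G (adjoint G v) = G (adjoint G vbar) \<bullet> v" "v \<bullet> G (adjoint G vbar) = G (adjoint G vbar) \<bullet> v"
    "u \<bullet> F (adjoint F u + adjoint G v - c) = u \<bullet> F (adjoint F u - c) + G (adjoint F u) \<bullet> v"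
    "v \<bullet> G (adjoint F u) = G (adjoint F u) \<bullet> v" "v \<bullet> G x = G x \<bullet> v"
    using sE sS x1 x2 by (auto simp: inner_commute aG aF linear_add[OF FG(1)] linear_diff[OF FG(1)] inner_add_right inner_diff_right)
  show ?thesis
    unfolding Lsm_def gq_def qn_def power2_norm_eq_inner
    using s
    by (simp add: linear_add[OF Sg(1)] linear_diff[OF Sg(1)] linear_add[OF Eg(1)] linear_diff[OF Eg(1)]
       linear_add[OF FG(2)] linear_diff[OF FG(2)] linear_scale[OF FG(2)]
       linear_add[OF lGa(1)] linear_diff[OF lGa(1)] 
       inner_add_left inner_add_right inner_diff_left inner_diff_right aG aF algebra_simps sS[of vbar v] sE[of vbar v]
       inner_commute[of b] inner_commute[of x] e)
qed

lemma shift_le: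
  fixes a a' :: ereal
  assumes "a \<noteq> -\<infinity>" "a' \<noteq> -\<infinity>"
  shows "a + ereal (x + C) \<le> a' + ereal (y + C) \<longleftrightarrow> a + ereal x \<le> a' + ereal y"
  using assms by (cases a; cases a') auto

lemma ereal_assoc2: "(a::ereal) + ereal x + ereal y = a + ereal (x + y)"
  by (simp add: add.assoc)


lemma quad_min:
  fixes Q :: "'a::ab_group_add \<Rightarrow> real"
  assumes s: "\<sigma> > 0" and Q0: "\<And>z. Q z \<ge> 0" and Qp: "\<And>z. Q z \<le> 0 \<Longrightarrow> z = 0" and Qz: "Q 0 = 0"
  shows "{v. is_minimizer (\<lambda>v. \<sigma>/2 * Q (v - a) + C) v} = {a}"
proof (intro set_eqI iffI)
  fix v assume "v \<in> {v. is_minimizer (\<lambda>v. \<sigma>/2 * Q (v - a) + C) v}"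
  then have "\<sigma>/2 * Q (v - a) + C \<le> \<sigma>/2 * Q (a - a) + C" unfolding is_minimizer_def by blast
  then have "\<sigma> * Q (v - a) \<le> 0" using Qz by simp
  then have "Q (v - a) \<le> 0" using s by (simp add: mult_le_0_iff)
  then show "v \<in> {a}" using Qp by fastforce
next
  fix v assume "v \<in> {a}"
  then show "v \<in> {v. is_minimizer (\<lambda>v. \<sigma>/2 * Q (v - a) + C) v}"
    unfolding is_minimizer_def using Qz Q0 s by simp
qed

lemma min_ereal_shift:
  assumes "a0 \<noteq> \<infinity>" "a0 \<noteq> -\<infinity>"
  shows "is_minimizer (\<lambda>v. a0 + ereal (g v)) x \<longleftrightarrow> is_minimizer g x"
  using assms unfolding is_minimizer_def by (cases a0) auto

theorem proposition2p2:
  fixes f :: "'u::euclidean_space \<Rightarrow> ereal"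
    and Sg :: "'v::euclidean_space \<Rightarrow> 'v" and b :: "'v"
    and F :: "'x::euclidean_space \<Rightarrow> 'u" and G :: "'x \<Rightarrow> 'v" and c :: "'x"
    and \<sigma> :: real
    and Eg :: "'v \<Rightarrow> 'v" and Tf :: "'u \<Rightarrow> 'u"
    and ubar up :: 'u and vbar vp :: 'v and xbar :: 'x
    and Tg :: "'v \<Rightarrow> 'v" and Tfh :: "'u \<Rightarrow> 'u"
    and cbar :: 'x and dg :: 'u and abar :: 'v and v' :: 'v
  assumes f: "closed_proper_convex f"
    and Sg: "linear Sg" "self_adjoint Sg" "psd Sg"
    and FG: "linear F" "linear G"
    and sigma: "\<sigma> > 0"
    and Eg: "linear Eg" "self_adjoint Eg" "pd Eg"
            "psd (\<lambda>v. Eg v - (1/\<sigma>) *\<^sub>R Sg v - G (adjoint G v))"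
    and Tf: "linear Tf" "self_adjoint Tf" "psd Tf"
    and Tg_def: "Tg \<equiv> (\<lambda>v. Eg v - (1/\<sigma>) *\<^sub>R Sg v - G (adjoint G v))"
    and Tfh_def: "Tfh \<equiv> (\<lambda>u. Tf u + F (adjoint G (inv Eg (G (adjoint F u)))))"
    and cbar_def: "cbar \<equiv> c - adjoint F ubar - adjoint G vbar"
    and dg_def: "dg \<equiv> F (adjoint G (inv Eg (b - G xbar - Sg vbar + \<sigma> *\<^sub>R G cbar)))"
    and abar_def: "abar \<equiv> (1/\<sigma>) *\<^sub>R b + Tg vbar + G (c - (1/\<sigma>) *\<^sub>R xbar)"
    and v'_def: "v' \<equiv> inv Eg (abar - G (adjoint F ubar))"
    and opt: "is_minimizer (\<lambda>(u, v). Lag f Sg b F G c \<sigma> u v xbar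
                 + ereal (\<sigma>/2 * qn Tfh (u - ubar) + \<sigma>/2 * qn Tg (v - vbar))) (up, vp)"
  shows
    \<comment> \<open>v' is the (unique) minimizer of its subproblem (constant f(ubar) dropped)\<close>
    "{v. is_minimizer (\<lambda>v. Lsm Sg b F G c \<sigma> ubar v xbar + \<sigma>/2 * qn Tg (v - vbar)) v} = {v'}
     \<comment> \<open>first procedure\<close>
     \<and> is_minimizer (\<lambda>u. Lag f Sg b F G c \<sigma> u vbar xbar
                          + ereal (inner dg u + \<sigma>/2 * qn Tf (u - ubar))) up
     \<comment> \<open>second procedure\<close>
     \<and> is_minimizer (\<lambda>u. Lag f Sg b F G c \<sigma> u v' xbar + ereal (\<sigma>/2 * qn Tf (u - ubar))) up
     \<comment> \<open>common v-step\<close>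
     \<and> {v. is_minimizer (\<lambda>v. Lag f Sg b F G c \<sigma> up v xbar + ereal (\<sigma>/2 * qn Tg (v - vbar))) v}
         = {inv Eg (abar - G (adjoint F up))}
     \<and> vp = inv Eg (abar - G (adjoint F up))
     \<comment> \<open>exactness: every output of either procedure is an optimal solution of the joint problem\<close>
     \<and> (\<forall>u. is_minimizer (\<lambda>u. Lag f Sg b F G c \<sigma> u vbar xbar
                          + ereal (inner dg u + \<sigma>/2 * qn Tf (u - ubar))) u
          \<longrightarrow> is_minimizer (\<lambda>(u, v). Lag f Sg b F G c \<sigma> u v xbar
                 + ereal (\<sigma>/2 * qn Tfh (u - ubar) + \<sigma>/2 * qn Tg (v - vbar)))
               (u, inv Eg (abar - G (adjoint F u))))
     \<and> (\<forall>u. is_minimizer (\<lambda>u. Lag f Sg b F G c \<sigma> u v' xbar + ereal (\<sigma>/2 * qn Tf (u - ubar))) u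
          \<longrightarrow> is_minimizer (\<lambda>(u, v). Lag f Sg b F G c \<sigma> u v xbar
                 + ereal (\<sigma>/2 * qn Tfh (u - ubar) + \<sigma>/2 * qn Tg (v - vbar)))
               (u, inv Eg (abar - G (adjoint F u))))"
  proof -
  have s: "\<sigma> \<noteq> 0" using sigma by simp
  have lGa: "linear (adjoint G)" "linear (adjoint F)" using FG adjoint_linear by auto
  have aG: "\<And>y z. inner (adjoint G y) z = inner y (G z)" "\<And>y z. inner z (adjoint G y) = inner y (G z)"
    using adjoint_clauses[OF FG(2)] by (auto simp: inner_commute)
  have aF: "\<And>y z. inner (adjoint F y) z = inner y (F z)" "\<And>y z. inner z (adjoint F y) = inner y (F z)"
    using adjoint_clauses[OF FG(1)] by (auto simp: inner_commute)
  have sE: "\<And>y z. inner (Eg y) z = inner (Eg z) y" using Eg(2) unfolding self_adjoint_def by (metis inner_commute)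
  have injE: "inj Eg"
  proof (rule injI)
    fix x y assume "Eg x = Eg y"
    then have "Eg (x - y) = 0" by (simp add: linear_diff[OF Eg(1)])
    then have "inner (x - y) (Eg (x - y)) = 0" by simp
    then show "x = y" using Eg(3) unfolding pd_def by (metis less_irrefl right_minus_eq)
  qed
  have surjE: "surj Eg" using linear_inj_imp_surj[OF Eg(1) injE] .
  have EI: "\<And>y. Eg (inv Eg y) = y" using surjE by (simp add: surj_f_inv_f)
  have IE: "\<And>z y. Eg z = y \<Longrightarrow> inv Eg y = z" using injE by (metis inv_f_f)
  define K where "K = (\<lambda>u. G (adjoint F u))"
  have lK: "linear K" unfolding K_def using FG(2) lGa(2) by (simp add: linear_compose[unfolded o_def])
  define R where "R = (\<lambda>u. inner xbar (adjoint F u - c) + \<sigma>/2 * (norm (adjoint F u - c))^2 + \<sigma>/2 * qn Tg vbar)"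
  define Q where "Q = (\<lambda>z. inner z (Eg z))"
  have Q0: "\<And>z. Q z \<ge> 0"
    using Eg(3) unfolding Q_def pd_def by (metis inner_zero_left less_le order.refl)
  have Qpos: "\<And>z. Q z \<le> 0 \<Longrightarrow> z = 0"
    using Eg(3) unfolding Q_def pd_def by (meson not_le)
  have Qz: "Q 0 = 0" unfolding Q_def by simp
  have Phi: "\<And>u v. Lsm Sg b F G c \<sigma> u v xbar + \<sigma>/2 * qn Tg (v - vbar)
      = \<sigma>/2 * inner v (Eg v) - \<sigma> * inner (abar - K u) v + R u"
    unfolding Tg_def abar_def K_def R_def using phi_form[OF Sg(1,2) FG s Eg(1,2)] by simp
  define V where "V = (\<lambda>u. inv Eg (abar - K u))"
  have EV: "\<And>u. Eg (V u) = abar - K u" unfolding V_def using EI by simp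
  have Phi2: "\<And>u v. Lsm Sg b F G c \<sigma> u v xbar + \<sigma>/2 * qn Tg (v - vbar)
      = \<sigma>/2 * Q (v - V u) - \<sigma>/2 * inner (V u) (abar - K u) + R u"
  proof -
    fix u v
    have hQ: "Q (v - V u) = inner v (Eg v) - 2 * inner (abar - K u) v + inner (V u) (abar - K u)"
      unfolding Q_def using EV[of u] sE[of v "V u"]
      by (simp add: linear_diff[OF Eg(1)] inner_diff_left inner_diff_right inner_commute)
    show "?thesis u v" unfolding Phi[of u v] hQ by (simp add: algebra_simps)
  qed
  have qT0: "qn Tg 0 = 0" unfolding qn_def by simp
  define psi where "psi = (\<lambda>u. Lsm Sg b F G c \<sigma> u vbar xbar + inner dg u + \<sigma>/2 * qn Tf (u - ubar))"
  have v'V: "v' = V ubar" unfolding v'_def V_def K_def by simp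
  have dgE: "dg = \<sigma> *\<^sub>R F (adjoint G (v' - vbar))"
  proof -
    have ev: "Eg v' = abar - K ubar" using EV[of ubar] unfolding v'V .
    have "Eg (\<sigma> *\<^sub>R (v' - vbar)) = b - G xbar - Sg vbar + \<sigma> *\<^sub>R G cbar"
      using s unfolding linear_scale[OF Eg(1)] linear_diff[OF Eg(1)] ev
      by (simp add: abar_def Tg_def cbar_def K_def scaleR_diff_right scaleR_add_right
          linear_diff[OF FG(2)] linear_scale[OF FG(2)] linear_add[OF FG(2)] algebra_simps)
    then show ?thesis unfolding dg_def using IE
      by (metis linear_scale[OF FG(1)] linear_scale[OF lGa(1)])
  qed
  have dgu: "\<And>u. inner dg u = \<sigma> * inner (v' - vbar) (K u)"
    unfolding dgE K_def by (metis aF(1) aG(2) inner_commute inner_scaleR_left)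
  have Tfh: "\<And>d. qn Tfh d = qn Tf d + inner (K d) (inv Eg (K d))"
    unfolding Tfh_def qn_def K_def by (simp add: inner_add_right) (metis aF(1) aG(2) inner_commute)
  define C1 where "C1 = - \<sigma>/2 * inner v' (abar - K ubar) - \<sigma>/2 * inner vbar (Eg vbar)
     + \<sigma> * inner (abar - K ubar) vbar - \<sigma> * inner v' (K ubar) + \<sigma> * inner vbar (K ubar)"
  have A: "\<And>u v. Lsm Sg b F G c \<sigma> u v xbar + (\<sigma>/2 * qn Tfh (u - ubar) + \<sigma>/2 * qn Tg (v - vbar))
      = psi u + C1 + \<sigma>/2 * Q (v - V u)"
  proof -
    fix u v
    define d where "d = u - ubar"
    define q where "q = inv Eg (K d)"
    have Eq: "Eg q = K d" unfolding q_def using EI by simp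
    have Ku: "K u = K ubar + K d" unfolding d_def by (simp add: linear_diff[OF lK])
    have Vu: "V u = v' - q"
      using IE[of "v' - q" "abar - K u"] EV[of ubar] Eq Ku unfolding V_def v'V
      by (simp add: linear_diff[OF Eg(1)])
    have i1: "inner q (abar - K ubar) = inner (K d) v'"
      using EV[of ubar] Eq sE[of q v'] unfolding v'V by (simp add: inner_commute)
    have p1: "Lsm Sg b F G c \<sigma> u vbar xbar = \<sigma>/2 * inner vbar (Eg vbar) - \<sigma> * inner (abar - K u) vbar + R u"
      using Phi[of u vbar] qT0 by simp
    have hT: "qn Tfh (u - ubar) = qn Tf (u - ubar) + inner (K d) q" unfolding q_def d_def by (rule Tfh)
    show "?thesis u v"
      using Phi2[of u v] p1 i1 unfolding psi_def hT dgu C1_def Vu Ku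
      by (simp add: inner_add_left inner_add_right inner_diff_left inner_diff_right inner_commute algebra_simps) argo
  qed
  define C2 where "C2 = - \<sigma>/2 * qn Tg (v' - vbar) + \<sigma>/2 * inner v' (Eg v') - \<sigma>/2 * inner vbar (Eg vbar)
     - \<sigma> * inner abar (v' - vbar)"
  have B: "\<And>u. Lsm Sg b F G c \<sigma> u v' xbar + \<sigma>/2 * qn Tf (u - ubar) = psi u + C2"
  proof -
    fix u
    have p1: "Lsm Sg b F G c \<sigma> u vbar xbar = \<sigma>/2 * inner vbar (Eg vbar) - \<sigma> * inner (abar - K u) vbar + R u"
      using Phi[of u vbar] qT0 by simp
    show "?thesis u" using Phi[of u v'] p1 unfolding psi_def dgu C2_def
      by (simp add: inner_add_left inner_add_right inner_diff_left inner_diff_right inner_commute algebra_simps)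
  qed
  have fni: "\<And>u. f u \<noteq> -\<infinity>" using f unfolding closed_proper_convex_def by auto
  obtain x0 where x0: "f x0 \<noteq> \<infinity>" using f unfolding closed_proper_convex_def by auto
  define P where "P = (\<lambda>u. f u + ereal (psi u))"
  define Jf where "Jf = (\<lambda>u v. f u + ereal (psi u + C1 + \<sigma>/2 * Q (v - V u)))"
  have eJ: "(\<lambda>(u, v). Lag f Sg b F G c \<sigma> u v xbar
                 + ereal (\<sigma>/2 * qn Tfh (u - ubar) + \<sigma>/2 * qn Tg (v - vbar))) = (\<lambda>(u, v). Jf u v)"
    unfolding Lag_def ereal_assoc2 A Jf_def by simp
  have eP1: "(\<lambda>u. Lag f Sg b F G c \<sigma> u vbar xbar
                          + ereal (inner dg u + \<sigma>/2 * qn Tf (u - ubar))) = P"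
    unfolding Lag_def ereal_assoc2 P_def psi_def by (simp add: add.assoc)
  have eP2: "(\<lambda>u. Lag f Sg b F G c \<sigma> u v' xbar + ereal (\<sigma>/2 * qn Tf (u - ubar)))
      = (\<lambda>u. f u + ereal (psi u + C2))"
    unfolding Lag_def ereal_assoc2 B by simp
  have eL: "\<And>u. (\<lambda>v. Lag f Sg b F G c \<sigma> u v xbar + ereal (\<sigma>/2 * qn Tg (v - vbar)))
      = (\<lambda>v. f u + ereal (\<sigma>/2 * Q (v - V u) + (- \<sigma>/2 * inner (V u) (abar - K u) + R u)))"
    unfolding Lag_def ereal_assoc2 Phi2 by (simp add: algebra_simps)
  have eS: "(\<lambda>v. Lsm Sg b F G c \<sigma> ubar v xbar + \<sigma>/2 * qn Tg (v - vbar))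
      = (\<lambda>v. \<sigma>/2 * Q (v - v') + (- \<sigma>/2 * inner (V ubar) (abar - K ubar) + R ubar))"
    unfolding Phi2 v'V by (simp add: algebra_simps)
  have Vf: "\<And>u. inv Eg (abar - G (adjoint F u)) = V u" unfolding V_def K_def by simp
  have sh: "\<And>C x. is_minimizer (\<lambda>u. f u + ereal (psi u + C)) x \<longleftrightarrow> is_minimizer P x"
    unfolding is_minimizer_def P_def using shift_le fni by simp
  have JV: "\<And>u. Jf u (V u) = f u + ereal (psi u + C1)" unfolding Jf_def using Qz by simp
  have Jge: "\<And>u v. f u + ereal (psi u + C1) \<le> Jf u v"
    unfolding Jf_def using Q0 sigma by (intro add_left_mono) simp
  have optJ: "\<And>u v. Jf up vp \<le> Jf u v"
  proof -
    fix u v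
    from opt have "(\<lambda>(u, v). Jf u v) (up, vp) \<le> (\<lambda>(u, v). Jf u v) (u, v)"
      unfolding eJ is_minimizer_def by blast
    then show "Jf up vp \<le> Jf u v" by simp
  qed
  have Pup0: "is_minimizer (\<lambda>u. f u + ereal (psi u + C1)) up"
    unfolding is_minimizer_def
  proof
    fix y
    have "f up + ereal (psi up + C1) \<le> Jf up vp" by (rule Jge)
    also have "\<dots> \<le> Jf y (V y)" by (rule optJ)
    finally show "f up + ereal (psi up + C1) \<le> f y + ereal (psi y + C1)" by (simp only: JV)
  qed
  have Pup: "is_minimizer P up" using Pup0 sh by blast
  have fup: "f up \<noteq> \<infinity>"
  proof
    assume "f up = \<infinity>"
    then have "P up = \<infinity>" unfolding P_def by simp
    moreover have "P up \<le> P x0" using Pup unfolding is_minimizer_def by blast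
    ultimately show False using x0 fni[of x0] unfolding P_def by (cases "f x0") auto
  qed
  have vpV: "vp = V up"
  proof -
    have "Jf up vp \<le> Jf up (V up)" by (rule optJ)
    then have "f up + ereal (psi up + C1 + \<sigma>/2 * Q (vp - V up)) \<le> f up + ereal (psi up + C1 + \<sigma>/2 * Q 0)"
      unfolding Jf_def by simp
    then have "\<sigma>/2 * Q (vp - V up) \<le> 0" using fup fni[of up] Qz by (cases "f up") auto
    then have "Q (vp - V up) \<le> 0" using sigma by (simp add: mult_le_0_iff)
    then show ?thesis using Qpos by fastforce
  qed
  have exact: "\<And>u. is_minimizer P u \<Longrightarrow> is_minimizer (\<lambda>(u, v). Jf u v) (u, V u)"
  proof -
    fix u assume mu: "is_minimizer P u"
    show "is_minimizer (\<lambda>(u, v). Jf u v) (u, V u)"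
      unfolding is_minimizer_def
    proof (clarify)
      fix u2 v2
      have "Jf u (V u) = f u + ereal (psi u + C1)" by (rule JV)
      also have "\<dots> \<le> f u2 + ereal (psi u2 + C1)" using mu sh[of C1 u] unfolding is_minimizer_def by blast
      also have "\<dots> \<le> Jf u2 v2" by (rule Jge)
      finally show "Jf u (V u) \<le> Jf u2 v2" .
    qed
  qed
  have lastset: "{v. is_minimizer (\<lambda>v. f up + ereal (\<sigma>/2 * Q (v - V up) + (- \<sigma>/2 * inner (V up) (abar - K up) + R up))) v} = {V up}"
  proof -
    have "{v. is_minimizer (\<lambda>v. f up + ereal (\<sigma>/2 * Q (v - V up) + (- \<sigma>/2 * inner (V up) (abar - K up) + R up))) v}
       = {v. is_minimizer (\<lambda>v. \<sigma>/2 * Q (v - V up) + (- \<sigma>/2 * inner (V up) (abar - K up) + R up)) v}"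
      using min_ereal_shift[OF fup fni[of up], of "\<lambda>v. \<sigma>/2 * Q (v - V up) + (- \<sigma>/2 * inner (V up) (abar - K up) + R up)"] by blast
    then show ?thesis using quad_min[of \<sigma> Q, OF sigma Q0 Qpos Qz] by simp
  qed
  show ?thesis
    unfolding eJ eP1 eP2 eL eS Vf sh
    using quad_min[of \<sigma> Q, OF sigma Q0 Qpos Qz] Pup vpV exact lastset
      min_ereal_shift[OF fup fni[of up]] quad_min[of \<sigma> Q, OF sigma Q0 Qpos Qz, of "V up"]
    by simp
qed

end
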